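(* Let $(A_n)_{n\in\mathbb Z^+}$ be a sequence of invertible linear operators on $\mathbb R^d$ that admits a strong exponential dichotomy with respect to a sequence of norms $\|\cdot\|_n$, $n\in\mathbb Z^+$, and projections $P_n$, $n\in\mathbb Z^+$. Let $Y\subset\mathbb R^d$ be any subspace with $\mathbb R^d=\operatorname{Im}P_0\oplus Y$, let $P_0'$ be the projection onto $\operatorname{Im}P_0$ along $Y$, and set $P'_n=\mathcal A(n,0)P'_0\mathcal A(0,n)$ for $n\in\mathbb Z^+$. Then $(A_n)_{n\in\mathbb Z^+}$ admits a strong exponential dichotomy with respect to the norms $\|\cdot\|_n$ and projections $P'_n$, $n\in\mathbb Z^+$.
   Context: $\mathbb Z^+=\{0,1,\dots\}$. $\mathcal A(m,n)=A_{m-1}\cdots A_n$ ($m>n$), $\mathrm{Id}$ ($m=n$), $A_m^{-1}\cdots A_{n-1}^{-1}$ ($m<n$). Strong exponential dichotomy w.r.t. norms $\{\|\cdot\|_n\}$ and projections $P_n$: $A_nP_n=P_{n+1}A_n$ for all $n$, and there exist $K>0$, $a\ge\lambda>0$ with, for $m\ge n$, $x\in\mathbb R^d$, $Q_m=\mathrm{Id}-P_m$: $\|\mathcal A(m,n)P_nx\|_m\le Ke^{-\lambda(m-n)}\|x\|_n$, $\|\mathcal A(n,m)Q_mx\|_n\le Ke^{-\lambda(m-n)}\|x\|_m$, $\|\mathcal A(m,n)x\|_m\le Ke^{a(m-n)}\|x\|_n$, $\|\mathcal A(n,m)x\|_n\le Ke^{a(m-n)}\|x\|_m$. *)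

theory Defs
  imports "HOL-Analysis.Analysis"
begin

text \<open>R^d is modelled by an arbitrary Euclidean space 'a (d = DIM('a)).\<close>

fun fwd :: "(nat \<Rightarrow> 'a \<Rightarrow> 'a) \<Rightarrow> nat \<Rightarrow> nat \<Rightarrow> 'a \<Rightarrow> 'a" where
  "fwd A n 0 = id"
| "fwd A n (Suc k) = A (n + k) \<circ> fwd A n k"

fun bwd :: "(nat \<Rightarrow> 'a \<Rightarrow> 'a) \<Rightarrow> nat \<Rightarrow> nat \<Rightarrow> 'a \<Rightarrow> 'a" where
  "bwd A m 0 = id"
| "bwd A m (Suc k) = bwd A m k \<circ> inv (A (m + k))"

definition cocyc :: "(nat \<Rightarrow> 'a \<Rightarrow> 'a) \<Rightarrow> nat \<Rightarrow> nat \<Rightarrow> 'a \<Rightarrow> 'a" where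
  "cocyc A m n = (if n \<le> m then fwd A n (m - n) else bwd A m (n - m))"

definition is_norm :: "('a::real_vector \<Rightarrow> real) \<Rightarrow> bool" where
  "is_norm N \<longleftrightarrow> (\<forall>x. 0 \<le> N x) \<and> (\<forall>x. N x = 0 \<longleftrightarrow> x = 0)
     \<and> (\<forall>c x. N (c *\<^sub>R x) = \<bar>c\<bar> * N x) \<and> (\<forall>x y. N (x + y) \<le> N x + N y)"

definition is_projection :: "('a::real_vector \<Rightarrow> 'a) \<Rightarrow> bool" where
  "is_projection P \<longleftrightarrow> linear P \<and> P \<circ> P = P"

definition strong_exp_dichotomy ::
  "(nat \<Rightarrow> 'a::real_vector \<Rightarrow> 'a) \<Rightarrow> (nat \<Rightarrow> 'a \<Rightarrow> real) \<Rightarrow> (nat \<Rightarrow> 'a \<Rightarrow> 'a) \<Rightarrow> bool" where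
  "strong_exp_dichotomy A N P \<longleftrightarrow>
     (\<forall>n. is_projection (P n)) \<and>
     (\<forall>n. A n \<circ> P n = P (Suc n) \<circ> A n) \<and>
     (\<exists>K a lam::real. K > 0 \<and> lam > 0 \<and> a \<ge> lam \<and>
        (\<forall>m n x. n \<le> m \<longrightarrow>
           N m (cocyc A m n (P n x)) \<le> K * exp (- lam * real (m - n)) * N n x
         \<and> N n (cocyc A n m (x - P m x)) \<le> K * exp (- lam * real (m - n)) * N m x
         \<and> N m (cocyc A m n x) \<le> K * exp (a * real (m - n)) * N n x
         \<and> N n (cocyc A n m x) \<le> K * exp (a * real (m - n)) * N m x))"

end

theory Submission
  imports Defs
begin

lemma norm_upper:
  fixes N :: "'a::euclidean_space \<Rightarrow> real"
  assumes "is_norm N"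
  shows "\<exists>M\<ge>0. \<forall>x. N x \<le> M * norm x"
proof -
  have N0: "N 0 = 0" using assms unfolding is_norm_def by auto
  have tri: "N (x+y) \<le> N x + N y" for x y using assms unfolding is_norm_def by auto
  have sc: "N (c *\<^sub>R x) = \<bar>c\<bar> * N x" for c x using assms unfolding is_norm_def by auto
  have nn: "0 \<le> N x" for x using assms unfolding is_norm_def by auto
  have sumle: "N (sum f S) \<le> (\<Sum>i\<in>S. N (f i))" for f :: "'a \<Rightarrow> 'a" and S
  proof (induction S rule: infinite_finite_induct)
    case (insert x F)
    then show ?case using tri[of "f x" "sum f F"] by simp
  qed (auto simp: N0)
  define M where "M = (\<Sum>b\<in>Basis. N b)"
  show ?thesis
  proof (intro exI[of _ M] conjI allI)
    show "0 \<le> M" unfolding M_def by (simp add: sum_nonneg nn)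
    fix x
    have "N x = N (\<Sum>b\<in>Basis. (x \<bullet> b) *\<^sub>R b)" by (simp add: euclidean_representation)
    also have "\<dots> \<le> (\<Sum>b\<in>Basis. N ((x \<bullet> b) *\<^sub>R b))" by (rule sumle)
    also have "\<dots> = (\<Sum>b\<in>Basis. \<bar>x \<bullet> b\<bar> * N b)" by (simp add: sc)
    also have "\<dots> \<le> (\<Sum>b\<in>Basis. norm x * N b)"
      by (rule sum_mono, rule mult_right_mono, auto simp: Basis_le_norm nn)
    also have "\<dots> = norm x * M" by (simp add: M_def sum_distrib_left)
    finally show "N x \<le> M * norm x" by (simp add: mult.commute)
  qed
qed

lemma norm_lower:
  fixes N :: "'a::euclidean_space \<Rightarrow> real"
  assumes "is_norm N"
  shows "\<exists>m>0. \<forall>x. m * norm x \<le> N x"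
proof -
  obtain M where M: "M \<ge> 0" "\<And>x. N x \<le> M * norm x" using norm_upper[OF assms] by blast
  have tri: "N (x+y) \<le> N x + N y" for x y using assms unfolding is_norm_def by auto
  have sc: "N (c *\<^sub>R x) = \<bar>c\<bar> * N x" for c x using assms unfolding is_norm_def by auto
  have nn: "0 \<le> N x" for x using assms unfolding is_norm_def by auto
  have z0: "N x = 0 \<longleftrightarrow> x = 0" for x using assms unfolding is_norm_def by auto
  have neg: "N (-x) = N x" for x using sc[of "-1" x] by simp
  have diff: "N x - N y \<le> N (x - y)" for x y using tri[of "x - y" y] by simp
  have absd: "\<bar>N x - N y\<bar> \<le> M * norm (x - y)" for x y
  proof -
    have "N y - N x \<le> N (x - y)" using diff[of y x] neg[of "x - y"] by simp
    then show ?thesis using diff[of x y] M(2)[of "x - y"] by linarith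
  qed
  have cont: "continuous_on UNIV N"
    unfolding continuous_on_iff
  proof (intro ballI allI impI)
    fix x and e :: real assume e: "0 < e"
    show "\<exists>d>0. \<forall>x'\<in>UNIV. dist x' x < d \<longrightarrow> dist (N x') (N x) < e"
    proof (intro exI[of _ "e / (M+1)"] conjI ballI impI)
      show "0 < e / (M+1)" using e M by simp
      fix x' assume d: "dist x' x < e / (M+1)"
      have "dist (N x') (N x) \<le> M * norm (x' - x)" using absd[of x' x] by (simp add: dist_real_def)
      also have "\<dots> \<le> M * (e / (M+1))" using d M by (intro mult_left_mono) (auto simp: dist_norm)
      also have "\<dots> < e" using e M by (simp add: field_simps)
      finally show "dist (N x') (N x) < e" .
    qed
  qed
  obtain b :: 'a where b: "b \<in> Basis" using nonempty_Basis by blast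
  have ne: "sphere (0::'a) 1 \<noteq> {}" using b by auto
  obtain z where z: "z \<in> sphere (0::'a) 1" and zmin: "\<forall>y\<in>sphere 0 1. N z \<le> N y"
    using continuous_attains_inf[OF compact_sphere ne continuous_on_subset[OF cont]] by blast
  have zn: "norm z = 1" using z by simp
  have mpos: "N z > 0" using nn[of z] z0[of z] zn by fastforce
  show ?thesis
  proof (intro exI[of _ "N z"] conjI allI)
    show "0 < N z" by fact
    fix x
    show "N z * norm x \<le> N x"
    proof (cases "x = 0")
      case True then show ?thesis using nn by simp
    next
      case False
      then have nx: "norm x > 0" by simp
      have "N z \<le> N ((1 / norm x) *\<^sub>R x)" using zmin False by simp
      also have "\<dots> = N x / norm x" using sc nx by simp
      finally show ?thesis using nx by (simp add: field_simps)
    qed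
  qed
qed

lemma lin_bound:
  fixes N :: "'a::euclidean_space \<Rightarrow> real"
  assumes "is_norm N" "linear L"
  shows "\<exists>C\<ge>0. \<forall>x. N (L x) \<le> C * N x"
proof -
  obtain M where M: "M \<ge> 0" "\<And>x. N x \<le> M * norm x" using norm_upper[OF assms(1)] by blast
  obtain m where m: "m > 0" "\<And>x. m * norm x \<le> N x" using norm_lower[OF assms(1)] by blast
  obtain B where B: "B > 0" "\<And>x. norm (L x) \<le> norm x * B"
    using bounded_linear.pos_bounded assms(2) linear_conv_bounded_linear by blast
  show ?thesis
  proof (intro exI[of _ "M * B / m"] conjI allI)
    show "0 \<le> M * B / m" using M B m by simp
    fix x
    have "N (L x) \<le> M * norm (L x)" by (rule M(2))
    also have "\<dots> \<le> M * (norm x * B)" using B M by (intro mult_left_mono) auto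
    also have "\<dots> \<le> M * ((N x / m) * B)"
      using m M B by (intro mult_left_mono mult_right_mono) (auto simp: field_simps)
    also have "\<dots> = M * B / m * N x" by simp
    finally show "N (L x) \<le> M * B / m * N x" .
  qed
qed

lemma arith_help:
  fixes K C E E1 E2 X Z W T1 T2 :: real
  assumes "T1 \<le> K*E*X" "T2 \<le> K*E1*Z" "Z \<le> C*W" "W \<le> K*E2*X" "E1*E2 \<le> E"
    "K > 0" "C \<ge> 0" "E1 > 0" "E2 > 0" "X \<ge> 0"
  shows "T1 + T2 \<le> (K + K*K*C)*E*X"
proof -
  have "T2 \<le> K*E1*(C*W)" using assms by (intro order.trans[OF assms(2)] mult_left_mono) auto
  also have "\<dots> \<le> K*E1*(C*(K*E2*X))" using assms by (intro mult_left_mono) auto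
  also have "\<dots> = K*K*C*(E1*E2)*X" by (simp add: algebra_simps)
  also have "\<dots> \<le> K*K*C*E*X" using assms by (intro mult_right_mono mult_left_mono) auto
  finally show ?thesis using assms(1) by (simp add: algebra_simps)
qed

theorem corollary7p1:
  fixes A :: "nat \<Rightarrow> 'a::euclidean_space \<Rightarrow> 'a"
    and N :: "nat \<Rightarrow> 'a \<Rightarrow> real"
    and P :: "nat \<Rightarrow> 'a \<Rightarrow> 'a"
    and Y :: "'a set"
    and P0' :: "'a \<Rightarrow> 'a"
  assumes "\<forall>n. linear (A n) \<and> bij (A n)"
    and "\<forall>n. is_norm (N n)"
    and "strong_exp_dichotomy A N P"
    and "subspace Y"
    and "range (P 0) \<inter> Y = {0}"
    and "{u + v | u v. u \<in> range (P 0) \<and> v \<in> Y} = UNIV"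
    and "\<forall>x. P0' x \<in> range (P 0) \<and> x - P0' x \<in> Y"
  shows "strong_exp_dichotomy A N (\<lambda>n. cocyc A n 0 \<circ> P0' \<circ> cocyc A 0 n)"
proof -
  obtain K a lam where Kp: "K > 0" "lam > 0" "a \<ge> lam" and
    bnd: "\<And>m n x. n \<le> m \<Longrightarrow>
           N m (cocyc A m n (P n x)) \<le> K * exp (- lam * real (m - n)) * N n x
         \<and> N n (cocyc A n m (x - P m x)) \<le> K * exp (- lam * real (m - n)) * N m x
         \<and> N m (cocyc A m n x) \<le> K * exp (a * real (m - n)) * N n x
         \<and> N n (cocyc A n m x) \<le> K * exp (a * real (m - n)) * N m x"
    using assms(3) unfolding strong_exp_dichotomy_def by blast
  have projP: "is_projection (P n)" for n using assms(3) unfolding strong_exp_dichotomy_def by blast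
  have comm: "A n (P n x) = P (Suc n) (A n x)" for n x
    using assms(3) unfolding strong_exp_dichotomy_def by (metis comp_apply)
  define G where "G n = fwd A 0 n" for n
  define H where "H n = bwd A 0 n" for n
  have linA: "linear (A n)" for n using assms(1) by blast
  have Ainv: "inv (A k) (A k x) = x" "A k (inv (A k) x) = x" for k x
    using assms(1) by (auto simp: bij_is_inj bij_is_surj surj_f_inv_f)
  have GS: "G (Suc n) x = A n (G n x)" for n x by (simp add: G_def)
  have HS: "H (Suc n) x = H n (inv (A n) x)" for n x by (simp add: H_def)
  have G0: "G 0 x = x" for x by (simp add: G_def)
  have H0: "H 0 x = x" for x by (simp add: H_def)
  have GH: "G n (H n x) = x" for n x by (induction n arbitrary: x) (simp_all add: GS HS G0 H0 Ainv)
  have HG: "H n (G n x) = x" for n x by (induction n arbitrary: x) (simp_all add: GS HS G0 H0 Ainv)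
  have linG: "linear (G n)" for n
  proof (induction n)
    case 0 then show ?case using linear_id by (simp add: G_def id_def)
  next
    case (Suc n)
    have "G (Suc n) = A n \<circ> G n" by (simp add: fun_eq_iff GS)
    then show ?case using linear_compose[OF Suc linA[of n]] by (simp only:)
  qed
  have linH: "linear (H n)" for n
  proof (rule linearI)
    fix x y show "H n (x + y) = H n x + H n y"
    proof -
      have "H n (x + y) = H n (G n (H n x) + G n (H n y))" by (simp add: GH)
      also have "\<dots> = H n (G n (H n x + H n y))" by (simp add: linear_add[OF linG])
      finally show ?thesis by (simp add: HG)
    qed
  next
    fix r x show "H n (r *\<^sub>R x) = r *\<^sub>R H n x"
    proof -
      have "H n (r *\<^sub>R x) = H n (r *\<^sub>R G n (H n x))" by (simp add: GH)
      also have "\<dots> = H n (G n (r *\<^sub>R H n x))" by (simp add: linear_scale[OF linG])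
      finally show ?thesis by (simp add: HG)
    qed
  qed
  have fwdeq: "fwd A n k x = G (n+k) (H n x)" for n k x
    by (induction k arbitrary: x) (simp_all add: GH GS)
  have bwdeq: "bwd A m k x = G m (H (m+k) x)" for m k x
    by (induction k arbitrary: x) (simp_all add: GH HS)
  have coc: "cocyc A m n x = G m (H n x)" for m n x
    unfolding cocyc_def by (auto simp: fwdeq bwdeq)
  have Peq: "P n x = G n (P 0 (H n x))" for n x
  proof (induction n arbitrary: x)
    case 0 then show ?case by (simp add: G0 H0)
  next
    case (Suc n)
    have "P (Suc n) x = P (Suc n) (A n (G n (H (Suc n) x)))"
      using GH[of "Suc n" x] GS by simp
    also have "\<dots> = A n (P n (G n (H (Suc n) x)))" by (simp add: comm)
    also have "\<dots> = G (Suc n) (P 0 (H (Suc n) x))" using Suc by (simp add: HG GS)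
    finally show ?case .
  qed
  have linP0: "linear (P 0)" using projP unfolding is_projection_def by blast
  have idem: "P 0 (P 0 x) = P 0 x" for x using projP[of 0] unfolding is_projection_def
    by (metis comp_apply)
  define S where "S = range (P 0)"
  have subS: "subspace S" unfolding S_def
    using real_vector.linear_subspace_image[OF linP0 subspace_UNIV] .
  have uniq: "u1 = u2" if "u1 \<in> S" "u2 \<in> S" "v1 \<in> Y" "v2 \<in> Y" "u1 + v1 = u2 + v2"
    for u1 u2 v1 v2
  proof -
    have "u1 - u2 \<in> S" using subS that by (simp add: subspace_diff)
    moreover have "u1 - u2 = v2 - v1" using that(5) by (simp add: algebra_simps)
    moreover have "v2 - v1 \<in> Y" using assms(4) that by (simp add: subspace_diff)
    ultimately have "u1 - u2 \<in> S \<inter> Y" by simp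
    then show ?thesis using assms(5) unfolding S_def by auto
  qed
  define Q where "Q = P0'"
  have QS: "Q x \<in> S" and QY: "x - Q x \<in> Y" for x using assms(7) unfolding Q_def S_def by auto
  have PS: "P 0 x \<in> S" for x unfolding S_def by simp
  have Y0: "0 \<in> Y" using assms(4) subspace_0 by blast
  have Q_P: "Q (P 0 x) = P 0 x" for x
    by (rule uniq[OF QS PS QY[of "P 0 x"] Y0]) simp
  have P_Q: "P 0 (Q x) = Q x" for x using QS[of x] idem unfolding S_def by auto
  have linQ: "linear Q"
  proof (rule linearI)
    fix x y show "Q (x + y) = Q x + Q y"
      by (rule uniq[OF QS[of "x+y"] _ QY[of "x+y"] subspace_add[OF assms(4) QY[of x] QY[of y]]])
        (auto simp: subspace_add[OF subS] QS algebra_simps)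
  next
    fix r x show "Q (r *\<^sub>R x) = r *\<^sub>R Q x"
      by (rule uniq[OF QS[of "r *\<^sub>R x"] _ QY[of "r *\<^sub>R x"] subspace_scale[OF assms(4) QY[of x]]])
        (auto simp: subspace_scale[OF subS] QS algebra_simps)
  qed
  have QQ: "Q (Q x) = Q x" for x by (metis P_Q Q_P)
  have Qdec: "Q y = P 0 y + P 0 (Q (y - P 0 y))" for y
    by (simp add: P_Q linear_diff[OF linQ] linear_diff[OF linP0] Q_P idem)
  obtain C where C: "C \<ge> 0" "\<And>x. N 0 (Q x) \<le> C * N 0 x"
    using lin_bound[OF _ linQ, of "N 0"] assms(2) by blast
  have Nn: "0 \<le> N n x" for n x using assms(2) unfolding is_norm_def by auto
  have Ntri: "N n (x + y) \<le> N n x + N n y" for n x y using assms(2) unfolding is_norm_def by auto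
  have Nsc: "N n (c *\<^sub>R x) = \<bar>c\<bar> * N n x" for n c x using assms(2) unfolding is_norm_def by auto
  have Nminus: "N n (x - y) \<le> N n x + N n y" for n x y
    using Ntri[of n x "-y"] Nsc[of n "-1" y] by simp
  have Pi: "(cocyc A n 0 \<circ> P0' \<circ> cocyc A 0 n) = G n \<circ> Q \<circ> H n" for n
    by (simp add: fun_eq_iff coc G0 H0 Q_def)
  have expl: "exp (- lam * real m) * exp (- lam * real n) \<le> exp (- lam * real (m - n))"
    if "n \<le> m" for m n :: nat
  proof -
    have "exp (- lam * real m) * exp (- lam * real n) = exp (- lam * (real m + real n))"
      by (simp add: exp_add[symmetric] algebra_simps)
    also have "\<dots> \<le> exp (- lam * real (m - n))" using that Kp by (simp add: of_nat_diff)
    finally show ?thesis .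
  qed
  show ?thesis
    unfolding strong_exp_dichotomy_def Pi
  proof ((rule conjI, rule_tac [2] conjI, rule_tac [3] exI[of _ "K + K*K*C"],
      rule_tac [3] exI[of _ a], rule_tac [3] exI[of _ lam]) ; (intro conjI allI impI)?)
    fix n
    show "is_projection (G n \<circ> Q \<circ> H n)"
      unfolding is_projection_def
      by (auto simp: fun_eq_iff HG QQ intro!: linear_compose linG linH linQ)
  next
    fix n
    show "A n \<circ> (G n \<circ> Q \<circ> H n) = G (Suc n) \<circ> Q \<circ> H (Suc n) \<circ> A n"
      by (simp add: fun_eq_iff GS HS Ainv)
  next
    show "K + K*K*C > 0" using Kp C by (simp add: add_pos_nonneg)
  next
    show "lam > 0" using Kp by auto
  next
    show "a \<ge> lam" using Kp by auto
  next
    fix m n :: nat and x :: 'a assume nm: "n \<le> m"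
    note b1 = bnd[of n m x, OF nm]
    show "N m (cocyc A m n x) \<le> (K + K*K*C) * exp (a * real (m - n)) * N n x"
    proof -
      have "K * exp (a * real (m - n)) * N n x \<le> (K + K*K*C) * exp (a * real (m - n)) * N n x"
        using Kp C Nn by (intro mult_right_mono) auto
      then show ?thesis using b1 by linarith
    qed
    show "N n (cocyc A n m x) \<le> (K + K*K*C) * exp (a * real (m - n)) * N m x"
    proof -
      have "K * exp (a * real (m - n)) * N m x \<le> (K + K*K*C) * exp (a * real (m - n)) * N m x"
        using Kp C Nn by (intro mult_right_mono) auto
      then show ?thesis using b1 by linarith
    qed
    show "N m (cocyc A m n ((G n \<circ> Q \<circ> H n) x)) \<le> (K + K*K*C) * exp (- lam * real (m - n)) * N n x"
    proof -
      define y where "y = H n x"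
      define z where "z = Q (y - P 0 y)"
      have qy: "Q y = P 0 y + P 0 z" using Qdec[of y] z_def by simp
      have "cocyc A m n ((G n \<circ> Q \<circ> H n) x) = G m (Q y)" by (simp add: coc HG y_def)
      also have "\<dots> = G m (P 0 y) + G m (P 0 z)" by (simp only: qy linear_add[OF linG])
      finally have e1: "cocyc A m n ((G n \<circ> Q \<circ> H n) x) = G m (P 0 y) + G m (P 0 z)" .
      have t1: "N m (G m (P 0 y)) \<le> K * exp (- lam * real (m - n)) * N n x"
        using b1 by (simp add: coc Peq[of n x] HG y_def)
      have t2: "N m (G m (P 0 z)) \<le> K * exp (- lam * real m) * N 0 z"
        using bnd[of 0 m z] by (simp add: coc H0 G0)
      have t3: "N 0 z \<le> C * N 0 (y - P 0 y)" unfolding z_def by (rule C(2))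
      have t4: "N 0 (y - P 0 y) \<le> K * exp (- lam * real n) * N n x"
        using bnd[of 0 n x] by (simp add: coc G0 Peq[of n x] HG linear_diff[OF linH] y_def)
      have "N m (G m (P 0 y) + G m (P 0 z)) \<le> N m (G m (P 0 y)) + N m (G m (P 0 z))" by (rule Ntri)
      also have "\<dots> \<le> (K + K*K*C) * exp (- lam * real (m - n)) * N n x"
        by (rule arith_help[OF t1 t2 t3 t4 expl[OF nm]]) (use Kp C Nn in auto)
      finally show ?thesis using e1 by simp
    qed
    show "N n (cocyc A n m (x - (G m \<circ> Q \<circ> H m) x)) \<le> (K + K*K*C) * exp (- lam * real (m - n)) * N m x"
    proof -
      define y where "y = H m x"
      define z where "z = Q (y - P 0 y)"
      have qy: "y - Q y = (y - P 0 y) - P 0 z" using Qdec[of y] z_def by simp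
      have "cocyc A n m (x - (G m \<circ> Q \<circ> H m) x) = G n (y - Q y)"
        by (simp add: coc HG y_def linear_diff[OF linH])
      also have "\<dots> = G n (y - P 0 y) - G n (P 0 z)" by (simp only: qy linear_diff[OF linG])
      finally have e1: "cocyc A n m (x - (G m \<circ> Q \<circ> H m) x) = G n (y - P 0 y) - G n (P 0 z)" .
      have t1: "N n (G n (y - P 0 y)) \<le> K * exp (- lam * real (m - n)) * N m x"
        using b1 by (simp add: coc Peq[of m x] HG y_def linear_diff[OF linH])
      have t2: "N n (G n (P 0 z)) \<le> K * exp (- lam * real n) * N 0 z"
        using bnd[of 0 n z] by (simp add: coc H0 G0)
      have t3: "N 0 z \<le> C * N 0 (y - P 0 y)" unfolding z_def by (rule C(2))
      have t4: "N 0 (y - P 0 y) \<le> K * exp (- lam * real m) * N m x"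
        using bnd[of 0 m x] by (simp add: coc G0 Peq[of m x] HG linear_diff[OF linH] y_def)
      have "N n (G n (y - P 0 y) - G n (P 0 z)) \<le> N n (G n (y - P 0 y)) + N n (G n (P 0 z))" by (rule Nminus)
      also have "\<dots> \<le> (K + K*K*C) * exp (- lam * real (m - n)) * N m x"
        by (rule arith_help[OF t1 t2 t3 t4]) (use Kp C Nn expl[OF nm] in \<open>auto simp: mult.commute\<close>)
      finally show ?thesis using e1 by simp
    qed
  qed
qed

end
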